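(* Let $f:\mathbb{N}\to[0,\infty)$ be a decreasing function with $\sum_{n=1}^\infty f(n)=\infty$. (1) If $A\subseteq\mathbb{N}$ satisfies $\liminf_{N\to\infty}\frac1N\sum_{n=1}^N\mathbbm{1}(n\in A)>0$, then \[ \sum_{n\in A}f(n)=\infty \qquad\text{and}\qquad \liminf_{N\to\infty}\frac{\sum_{n=1}^N\mathbbm{1}(n\in A)f(n)}{\sum_{n=1}^Nf(n)}>0. \] (2) There exists a convex, strictly increasing function $a:\mathbb{N}\to\mathbb{N}$ with $\lim_{n\to\infty}(a(n)-a(n-1))=\infty$ such that $\sum_{n=1}^\infty f(a(n))=\infty$. *)

theory Defs
  imports "HOL-Analysis.Analysis"
begin

end

theory Submission
  imports Defs
begin

lemma unbounded_partial:
  fixes g :: "nat \<Rightarrow> real"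
  assumes nn: "\<And>n. 0 \<le> g n" and ns: "\<not> summable g"
  shows "\<forall>\<^sub>F N in sequentially. B \<le> (\<Sum>n<N. g n)"
proof -
  obtain N0 where N0: "B < (\<Sum>n<N0. g n)"
    using summableI_nonneg_bounded[of g B] nn ns by (meson not_le)
  have "B \<le> (\<Sum>n<N. g n)" if "N \<ge> N0" for N
  proof -
    have "(\<Sum>n<N0. g n) \<le> (\<Sum>n<N. g n)"
      by (rule sum_mono2) (use that nn in auto)
    then show ?thesis using N0 by linarith
  qed
  then show ?thesis unfolding eventually_sequentially by blast
qed

lemma at_top_not_summable:
  fixes g :: "nat \<Rightarrow> real"
  assumes nn: "\<And>n. 0 \<le> g n" and ev: "\<And>B. \<forall>\<^sub>F N in sequentially. B \<le> (\<Sum>n<N. g n)"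
  shows "\<not> summable g"
proof
  assume s: "summable g"
  obtain N where "suminf g + 1 \<le> (\<Sum>n<N. g n)"
    using ev[of "suminf g + 1"] unfolding eventually_sequentially by blast
  moreover have "(\<Sum>n<N. g n) \<le> suminf g" using sum_le_suminf[OF s, of "{..<N}"] nn by auto
  ultimately show False by linarith
qed

fun seqb :: "(nat \<Rightarrow> nat) \<Rightarrow> nat \<Rightarrow> nat" where
  "seqb g 0 = 1"
| "seqb g (Suc n) = seqb g n + g (seqb g n)"

lemma card_sum: fixes N :: nat shows "real (card (A \<inter> {1..N})) = (\<Sum>n=1..N. indicator A n)"
  using sum.inter_restrict[of "{1..N}" "\<lambda>_. 1::real" A] by (simp add: indicator_def of_bool_def Int_commute)

lemma part1:
  fixes f :: "nat \<Rightarrow> real" and A :: "nat set"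
  assumes nonneg: "\<forall>n\<ge>1. f n \<ge> 0"
    and decr: "\<forall>m n. 1 \<le> m \<longrightarrow> m \<le> n \<longrightarrow> f n \<le> f m"
    and div: "\<not> summable (\<lambda>n. f (Suc n))"
    and L: "Liminf sequentially (\<lambda>N. ereal (real (card (A \<inter> {1..N})) / real N)) > 0"
  shows "\<not> summable (\<lambda>n. indicator A (Suc n) * f (Suc n)) \<and>
              Liminf sequentially
                (\<lambda>N. ereal ((\<Sum>n=1..N. indicator A n * f n) / (\<Sum>n=1..N. f n))) > 0"
proof -
  obtain \<delta> where \<delta>: "0 < ereal \<delta>" "ereal \<delta> < Liminf sequentially (\<lambda>N. ereal (real (card (A \<inter> {1..N})) / real N))"
    using ereal_dense2[OF L] by blast
  hence dpos: "\<delta> > 0" by simp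
  from less_LiminfD[OF \<delta>(2)] obtain N1 where N1: "\<forall>N\<ge>N1. ereal \<delta> < ereal (real (card (A \<inter> {1..N})) / real N)"
    by (auto simp: eventually_sequentially)
  define N0 where "N0 = max N1 1"
  define S where "S N = (\<Sum>n=1..N. indicator A n :: real)" for N
  define T where "T N = (\<Sum>n=1..N. indicator A n * f n)" for N
  define F where "F N = (\<Sum>n=1..N. f n)" for N
  have SN: "\<delta> * real N \<le> S N" if "N \<ge> N0" for N
  proof -
    have "N \<ge> 1" "N \<ge> N1" using that by (auto simp: N0_def)
    then have "\<delta> < real (card (A \<inter> {1..N})) / real N" using N1 by auto
    then show ?thesis unfolding S_def card_sum[symmetric] using \<open>N\<ge>1\<close> by (simp add: field_simps)
  qed
  define C where "C = T N0 - S N0 * f N0 - \<delta> * (F N0 - real N0 * f N0)"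
  have key: "T N - S N * f N - (T N0 - S N0 * f N0) \<ge> \<delta> * ((F N - real N * f N) - (F N0 - real N0 * f N0))"
    if "N \<ge> N0" for N
    using that
  proof (induction N rule: dec_induct)
    case base show ?case by simp
  next
    case (step n)
    have n1: "n \<ge> 1" using step.hyps N0_def by auto
    have T: "T (Suc n) = T n + indicator A (Suc n) * f (Suc n)" by (simp add: T_def)
    have S: "S (Suc n) = S n + indicator A (Suc n)" by (simp add: S_def)
    have F: "F (Suc n) = F n + f (Suc n)" by (simp add: F_def)
    have "S n * (f n - f (Suc n)) \<ge> \<delta> * real n * (f n - f (Suc n))"
      by (rule mult_right_mono[OF SN[OF step.hyps(1)]]) (use decr n1 in auto)
    then show ?case using step.IH unfolding T S F by (simp add: algebra_simps)
  qed
  have lowb: "T N \<ge> \<delta> * F N + C" if "N \<ge> N0" for N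
  proof -
    have "N \<ge> 1" using that by (auto simp: N0_def)
    have "S N * f N \<ge> \<delta> * real N * f N"
      by (rule mult_right_mono[OF SN[OF that]]) (use nonneg \<open>N\<ge>1\<close> in auto)
    then show ?thesis using key[OF that] unfolding C_def by (simp add: algebra_simps)
  qed
  have Fs: "F N = (\<Sum>k<N. f (Suc k))" for N unfolding F_def by (simp add: sum.atLeast1_atMost_eq)
  have Ts: "T N = (\<Sum>k<N. indicator A (Suc k) * f (Suc k))" for N unfolding T_def by (simp add: sum.atLeast1_atMost_eq)
  have Fev: "\<forall>\<^sub>F N in sequentially. B \<le> F N" for B
    unfolding Fs using unbounded_partial[of "\<lambda>k. f (Suc k)"] nonneg div by auto
  have "\<not> summable (\<lambda>n. indicator A (Suc n) * f (Suc n))"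
  proof (rule at_top_not_summable)
    show "0 \<le> indicator A (Suc n) * f (Suc n)" for n using nonneg by (simp add: indicator_def)
    fix B
    have "\<forall>\<^sub>F N in sequentially. (B - C)/\<delta> \<le> F N \<and> N \<ge> N0"
      using Fev eventually_ge_at_top by (rule eventually_conj)
    then show "\<forall>\<^sub>F N in sequentially. B \<le> (\<Sum>n<N. indicator A (Suc n) * f (Suc n))"
    proof (rule eventually_mono)
      fix N assume "(B - C)/\<delta> \<le> F N \<and> N \<ge> N0"
      then have "B - C \<le> \<delta> * F N" "N \<ge> N0" using dpos by (auto simp: pos_divide_le_eq mult.commute)
      then show "B \<le> (\<Sum>n<N. indicator A (Suc n) * f (Suc n))" using lowb[of N] Ts[of N] by linarith
    qed
  qed
  moreover have "Liminf sequentially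
                (\<lambda>N. ereal ((\<Sum>n=1..N. indicator A n * f n) / (\<Sum>n=1..N. f n))) > 0"
  proof -
    have ev: "\<forall>\<^sub>F N in sequentially. max 1 (-2*C/\<delta>) \<le> F N \<and> N \<ge> N0"
      using Fev eventually_ge_at_top by (rule eventually_conj)
    have "\<forall>\<^sub>F N in sequentially. ereal (\<delta>/2) \<le> ereal (T N / F N)"
    proof (rule eventually_mono[OF ev])
      fix N assume H: "max 1 (-2*C/\<delta>) \<le> F N \<and> N \<ge> N0"
      then have F1: "F N \<ge> 1" and F2: "-2*C/\<delta> \<le> F N" by auto
      have "-2*C/\<delta> * \<delta> \<le> F N * \<delta>" using mult_right_mono[OF F2 less_imp_le[OF dpos]] .
      then have "-2*C \<le> \<delta> * F N" using dpos by (simp add: mult.commute)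
      then have "\<delta>/2 * F N \<le> T N" using lowb[of N] H by linarith
      then show "ereal (\<delta>/2) \<le> ereal (T N / F N)" using F1 by (simp add: pos_le_divide_eq)
    qed
    then have "ereal (\<delta>/2) \<le> Liminf sequentially (\<lambda>N. ereal (T N / F N))" by (rule Liminf_bounded)
    moreover have "0 < ereal (\<delta>/2)" using dpos by simp
    ultimately show ?thesis unfolding T_def F_def by (meson less_le_trans)
  qed
  ultimately show ?thesis by blast
qed


lemma part2:
  fixes f :: "nat \<Rightarrow> real"
  assumes nonneg: "\<forall>n\<ge>1. f n \<ge> 0"
    and decr: "\<forall>m n. 1 \<le> m \<longrightarrow> m \<le> n \<longrightarrow> f n \<le> f m"
    and div: "\<not> summable (\<lambda>n. f (Suc n))"
  shows "\<exists>a :: nat \<Rightarrow> nat.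
            (\<forall>n\<ge>1. a n \<ge> 1) \<and>
            (\<forall>n\<ge>1. a n < a (Suc n)) \<and>
            (\<forall>n\<ge>1. 2 * a (Suc n) \<le> a n + a (Suc (Suc n))) \<and>
            filterlim (\<lambda>n. real (a (Suc n)) - real (a n)) at_top sequentially \<and>
            \<not> summable (\<lambda>n. f (a (Suc n)))"
proof -
  define P where "P x = 1 + (\<Sum>m\<in>{1..<x}. f m)" for x
  define g where "g x = nat \<lceil>sqrt (P x)\<rceil>" for x
  define b where "b = seqb g"
  have Pmono: "P x \<le> P y" if "x \<le> y" for x y
  proof -
    have "(\<Sum>m\<in>{1..<x}. f m) \<le> (\<Sum>m\<in>{1..<y}. f m)"
      by (rule sum_mono2) (use that nonneg in auto)
    then show ?thesis by (simp add: P_def)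
  qed
  have P1: "P x \<ge> 1" for x unfolding P_def using nonneg by (smt (verit) atLeastLessThan_iff sum_nonneg)
  have Pdiff: "P y - P x = (\<Sum>m\<in>{x..<y}. f m)" if "1 \<le> x" "x \<le> y" for x y
    using sum.atLeastLessThan_concat[of 1 x y f] that by (simp add: P_def)
  have Psuc: "P (Suc N) = 1 + (\<Sum>k<N. f (Suc k))" for N
    unfolding P_def by (simp add: atLeastLessThanSuc_atLeastAtMost sum.atLeast1_atMost_eq)
  have Pev: "\<forall>\<^sub>F N in sequentially. B \<le> P (Suc N)" for B
    using unbounded_partial[of "\<lambda>k. f (Suc k)" "B - 1"] nonneg div unfolding Psuc
    by (auto elim: eventually_mono)
  have sq1: "sqrt (P x) \<ge> 1" for x using P1[of x] by simp
  have g1: "g x \<ge> 1" for x using sq1[of x] unfolding g_def by linarith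
  have gmono: "g x \<le> g y" if "x \<le> y" for x y
    unfolding g_def using Pmono[OF that] by (intro nat_mono ceiling_mono real_sqrt_le_mono)
  have gge: "real (g x) \<ge> sqrt (P x)" for x
    unfolding g_def using sq1[of x] by (simp add: le_of_int_ceiling)
  have gle: "real (g x) \<le> sqrt (P x) + 1" for x
    unfolding g_def using sq1[of x] of_int_ceiling_le_add_one[of "sqrt (P x)"] by simp
  have b0: "b 0 = 1" and bS: "b (Suc n) = b n + g (b n)" for n by (simp_all add: b_def)
  have bge: "b n \<ge> Suc n" for n
  proof (induction n)
    case 0 then show ?case using b0 by simp
  next
    case (Suc n) then show ?case using bS[of n] g1[of "b n"] by simp
  qed
  have bmono: "b n < b (Suc n)" for n using bS g1[of "b n"] by simp
  have step: "sqrt (P (b (Suc n))) - sqrt (P (b n)) \<le> 2 * f (b n)" for n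
  proof -
    define x where "x = b n"
    define y where "y = b (Suc n)"
    have x1: "x \<ge> 1" using bge[of n] x_def by simp
    have y: "y = x + g x" using bS x_def y_def by simp
    have "P y - P x = (\<Sum>m\<in>{x..<y}. f m)" using Pdiff[OF x1] y by simp
    also have "\<dots> \<le> (\<Sum>m\<in>{x..<y}. f x)" by (rule sum_mono) (use decr x1 in auto)
    also have "\<dots> = real (g x) * f x" using y by simp
    also have "\<dots> \<le> (sqrt (P x) + 1) * f x" by (rule mult_right_mono[OF gle]) (use nonneg x1 in auto)
    also have "\<dots> \<le> (2 * sqrt (P y)) * f x"
    proof (rule mult_right_mono)
      have "sqrt (P x) \<le> sqrt (P y)" using Pmono[of x y] y by simp
      then show "sqrt (P x) + 1 \<le> 2 * sqrt (P y)" using sq1[of x] by linarith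
    qed (use nonneg x1 in auto)
    finally have d: "P y - P x \<le> 2 * sqrt (P y) * f x" .
    have le: "sqrt (P x) \<le> sqrt (P y)" using Pmono[of x y] y by simp
    have "(sqrt (P y) - sqrt (P x)) * sqrt (P y) \<le> (sqrt (P y) - sqrt (P x)) * (sqrt (P y) + sqrt (P x))"
      by (rule mult_left_mono) (use le sq1[of x] in auto)
    also have "\<dots> = P y - P x" using P1[of x] P1[of y]
      by (simp add: algebra_simps)
    finally have "(sqrt (P y) - sqrt (P x)) * sqrt (P y) \<le> (2 * f x) * sqrt (P y)" using d by (simp add: algebra_simps)
    then have "sqrt (P y) - sqrt (P x) \<le> 2 * f x" using sq1[of y] by (simp add: mult_le_cancel_right)
    then show ?thesis by (simp add: x_def y_def)
  qed
  have tele: "sqrt (P (b N)) - 1 \<le> 2 * (\<Sum>n<N. f (b n))" for N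
  proof -
    have "(\<Sum>n<N. sqrt (P (b (Suc n))) - sqrt (P (b n))) \<le> (\<Sum>n<N. 2 * f (b n))"
      by (rule sum_mono) (rule step)
    moreover have "P (b 0) = 1" using b0 by (simp add: P_def)
    moreover have "(\<Sum>n<N. sqrt (P (b (Suc n))) - sqrt (P (b n))) = sqrt (P (b N)) - sqrt (P (b 0))"
      by (rule sum_lessThan_telescope)
    ultimately show ?thesis by (simp add: sum_distrib_left)
  qed
  have ns: "\<not> summable (\<lambda>n. f (b n))"
  proof (rule at_top_not_summable)
    show "0 \<le> f (b n)" for n using nonneg bge[of n] by auto
    fix B
    show "\<forall>\<^sub>F N in sequentially. B \<le> (\<Sum>n<N. f (b n))"
    proof (rule eventually_mono[OF Pev[of "(2*B+1)^2"]])
      fix N assume H: "(2*B+1)^2 \<le> P (Suc N)"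
      have "P (Suc N) \<le> P (b N)" using Pmono bge by blast
      then have "sqrt ((2*B+1)^2) \<le> sqrt (P (b N))" using H by (simp del: real_sqrt_abs)
      then have "2*B+1 \<le> sqrt (P (b N))" by simp
      then show "B \<le> (\<Sum>n<N. f (b n))" using tele[of N] by linarith
    qed
  qed
  have lim: "filterlim (\<lambda>n. real (b (Suc n)) - real (b n)) at_top sequentially"
    unfolding filterlim_at_top
  proof
    fix Z :: real
    show "\<forall>\<^sub>F n in sequentially. Z \<le> real (b (Suc n)) - real (b n)"
    proof (rule eventually_mono[OF Pev[of "Z^2"]])
      fix n assume H: "Z^2 \<le> P (Suc n)"
      have "P (Suc n) \<le> P (b n)" using Pmono bge by blast
      then have "sqrt (Z^2) \<le> sqrt (P (b n))" using H by (simp del: real_sqrt_abs)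
      then have "Z \<le> sqrt (P (b n))" by simp
      then show "Z \<le> real (b (Suc n)) - real (b n)" using gge[of "b n"] bS[of n] by simp
    qed
  qed
  have conv: "2 * b (Suc n) \<le> b n + b (Suc (Suc n))" for n
    using bS[of n] bS[of "Suc n"] gmono[of "b n" "b (Suc n)"] bmono[of n] by simp
  show ?thesis
  proof (intro exI[of _ b] conjI allI impI)
    show "b n \<ge> 1" for n using bge[of n] by simp
    show "\<not> summable (\<lambda>n. f (b (Suc n)))" using ns summable_Suc_iff[of "\<lambda>n. f (b n)"] by simp
  qed (use bge bmono conv lim Suc_le_D in auto)
qed

theorem lemma2p7:
  fixes f :: "nat \<Rightarrow> real"
  assumes nonneg: "\<forall>n\<ge>1. f n \<ge> 0"
    and decr: "\<forall>m n. 1 \<le> m \<longrightarrow> m \<le> n \<longrightarrow> f n \<le> f m"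
    and div: "\<not> summable (\<lambda>n. f (Suc n))"
  shows "(\<forall>A :: nat set.
            Liminf sequentially (\<lambda>N. ereal (real (card (A \<inter> {1..N})) / real N)) > 0 \<longrightarrow>
              \<not> summable (\<lambda>n. indicator A (Suc n) * f (Suc n)) \<and>
              Liminf sequentially
                (\<lambda>N. ereal ((\<Sum>n=1..N. indicator A n * f n) / (\<Sum>n=1..N. f n))) > 0)
       \<and> (\<exists>a :: nat \<Rightarrow> nat.
            (\<forall>n\<ge>1. a n \<ge> 1) \<and>
            (\<forall>n\<ge>1. a n < a (Suc n)) \<and>
            (\<forall>n\<ge>1. 2 * a (Suc n) \<le> a n + a (Suc (Suc n))) \<and>
            filterlim (\<lambda>n. real (a (Suc n)) - real (a n)) at_top sequentially \<and>
            \<not> summable (\<lambda>n. f (a (Suc n))))"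
  using part1[OF assms] part2[OF assms] by blast

end
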